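(* Let $V$ be a vector configuration with $\operatorname{codeg}^*(V)\ge1$. Then there is a totally cyclic subconfiguration $W\subseteq V$ with $\operatorname{codeg}^*(W)=\operatorname{codeg}^*(V)$.
   Context: A vector configuration is a finite family (repetitions allowed) of vectors in $\mathbb{R}^r$; a subconfiguration is a subfamily; cardinalities count multiplicities. A configuration $W$ is totally cyclic if there exist real numbers $\lambda_w>0$, $w\in W$, with $\sum_{w\in W}\lambda_w w=0$. For a nonzero linear functional $f$ on $\mathbb{R}^r$ let $H=\{f=0\}$, $\overline{H}^-=\{f\le0\}$. The dual codegree is $\operatorname{codeg}^*(X)=\min_H|\overline{H}^-\cap X|$, the minimum over all such oriented linear hyperplanes $H$. *)

theory Defs
  imports "HOL-Analysis.Analysis"
begin

text \<open>A vector configuration in R^r is modelled as a finite index set I together with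
  a map v from indices to vectors (repetitions allowed); a subconfiguration is given
  by a subset of the index set; cardinalities count indices.\<close>

definition totally_cyclic :: "'i set \<Rightarrow> ('i \<Rightarrow> real^'n) \<Rightarrow> bool" where
  "totally_cyclic I v \<longleftrightarrow>
     (\<exists>c::'i \<Rightarrow> real. (\<forall>i\<in>I. c i > 0) \<and> (\<Sum>i\<in>I. c i *\<^sub>R v i) = 0)"

definition codeg_star :: "'i set \<Rightarrow> ('i \<Rightarrow> real^'n) \<Rightarrow> nat" where
  "codeg_star I v =
     Min {card {i\<in>I. f (v i) \<le> 0} | f :: real^'n \<Rightarrow> real. linear f \<and> f \<noteq> (\<lambda>x. 0)}"

end

theory Submission
  imports Defs
begin

lemma cone_hull_sub:
  fixes v :: "'i \<Rightarrow> real^'n"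
  assumes "finite I"
  shows "convex_cone hull (v ` I) \<subseteq> {x. \<exists>c. (\<forall>i\<in>I. 0 \<le> c i) \<and> x = (\<Sum>i\<in>I. c i *\<^sub>R v i)}"
    (is "_ \<subseteq> ?S")
proof (rule hull_minimal)
  show "v ` I \<subseteq> ?S"
  proof
    fix x assume "x \<in> v ` I"
    then obtain k where k: "k \<in> I" "x = v k" by auto
    have "x = (\<Sum>i\<in>I. (if i = k then 1 else 0) *\<^sub>R v i)"
    proof -
      have "(\<Sum>i\<in>I. (if i = k then 1 else 0) *\<^sub>R v i) = (\<Sum>i\<in>I. if i = k then v i else 0)"
        by (intro sum.cong) auto
      also have "\<dots> = v k" using k assms by (simp add: sum.delta)
      finally show ?thesis using k by simp
    qed
    then show "x \<in> ?S" by (intro CollectI exI[of _ "\<lambda>i. if i = k then 1 else 0"]) auto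
  qed
  show "convex_cone ?S"
    unfolding convex_cone_iff
  proof (intro conjI ballI allI impI)
    show "0 \<in> ?S" by (intro CollectI exI[of _ "\<lambda>i. 0"]) auto
  next
    fix x y assume "x \<in> ?S" "y \<in> ?S"
    then obtain c d where "\<forall>i\<in>I. 0 \<le> c i" "x = (\<Sum>i\<in>I. c i *\<^sub>R v i)"
      "\<forall>i\<in>I. 0 \<le> d i" "y = (\<Sum>i\<in>I. d i *\<^sub>R v i)" by auto
    then show "x + y \<in> ?S"
      by (intro CollectI exI[of _ "\<lambda>i. c i + d i"]) (auto simp: scaleR_add_left sum.distrib)
  next
    fix x and t :: real assume "x \<in> ?S" "0 \<le> t"
    then obtain c where "\<forall>i\<in>I. 0 \<le> c i" "x = (\<Sum>i\<in>I. c i *\<^sub>R v i)" by auto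
    then show "t *\<^sub>R x \<in> ?S" using \<open>0 \<le> t\<close>
      by (intro CollectI exI[of _ "\<lambda>i. t * c i"]) (auto simp: scaleR_sum_right)
  qed
qed

lemma gordan:
  fixes v :: "'i \<Rightarrow> real^'n"
  assumes fin: "finite I" and ntc: "\<not> totally_cyclic I v"
  shows "\<exists>a. (\<forall>i\<in>I. 0 \<le> inner a (v i)) \<and> (\<exists>j\<in>I. 0 < inner a (v j))"
proof -
  let ?H = "convex_cone hull (v ` I)"
  have "\<exists>j\<in>I. - v j \<notin> ?H"
  proof (rule ccontr)
    assume "\<not> ?thesis"
    then have "\<forall>j\<in>I. \<exists>c. (\<forall>i\<in>I. 0 \<le> c i) \<and> - v j = (\<Sum>i\<in>I. c i *\<^sub>R v i)"
      using cone_hull_sub[OF fin, of v] by blast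
    then obtain C where C: "\<And>j. j \<in> I \<Longrightarrow> (\<forall>i\<in>I. 0 \<le> C j i) \<and> - v j = (\<Sum>i\<in>I. C j i *\<^sub>R v i)"
      by metis
    define d where "d i = 1 + (\<Sum>j\<in>I. C j i)" for i
    have pos: "\<forall>i\<in>I. d i > 0"
    proof
      fix i assume "i \<in> I"
      have "0 \<le> (\<Sum>j\<in>I. C j i)" using C \<open>i \<in> I\<close> by (intro sum_nonneg) auto
      then show "d i > 0" unfolding d_def by simp
    qed
    have "(\<Sum>i\<in>I. d i *\<^sub>R v i) = (\<Sum>i\<in>I. v i) + (\<Sum>i\<in>I. \<Sum>j\<in>I. C j i *\<^sub>R v i)"
      unfolding d_def by (simp add: scaleR_add_left sum.distrib scaleR_sum_left)
    also have "(\<Sum>i\<in>I. \<Sum>j\<in>I. C j i *\<^sub>R v i) = (\<Sum>j\<in>I. \<Sum>i\<in>I. C j i *\<^sub>R v i)"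
      by (rule sum.swap)
    also have "\<dots> = (\<Sum>j\<in>I. - v j)" using C by (intro sum.cong) auto
    finally have "(\<Sum>i\<in>I. d i *\<^sub>R v i) = 0" by (simp add: sum_negf)
    then have "totally_cyclic I v" using pos unfolding totally_cyclic_def by blast
    then show False using ntc by simp
  qed
  then obtain j where j: "j \<in> I" "- v j \<notin> ?H" by blast
  have cl: "closed ?H" by (rule closed_convex_cone_hull) (use fin in auto)
  obtain a b where ab: "inner a (- v j) < b" "\<forall>x\<in>?H. b < inner a x"
    using separating_hyperplane_closed_point[OF convex_convex_cone_hull cl j(2)] by blast
  have b0: "b < 0" using ab(2) convex_cone_hull_contains_0 by fastforce
  have nn: "\<forall>i\<in>I. 0 \<le> inner a (v i)"
  proof
    fix i assume i: "i \<in> I"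
    show "0 \<le> inner a (v i)"
    proof (rule ccontr)
      assume neg: "\<not> 0 \<le> inner a (v i)"
      define t where "t = b / inner a (v i)"
      have t0: "0 \<le> t" using neg b0 unfolding t_def by (simp add: divide_nonpos_neg)
      have "v i \<in> ?H" using i by (simp add: hull_inc)
      then have "t *\<^sub>R v i \<in> ?H" using t0 convex_cone_convex_cone_hull convex_cone_scaleR by blast
      then have "b < inner a (t *\<^sub>R v i)" using ab(2) by blast
      moreover have "inner a (t *\<^sub>R v i) = b" using neg unfolding t_def by simp
      ultimately show False by simp
    qed
  qed
  have "0 < inner a (v j)" using ab(1) b0 by simp
  then show ?thesis using nn j(1) by blast
qed

lemma codeg_set_props:
  fixes v :: "'i \<Rightarrow> real^'n"
  assumes "finite I"
  shows "finite {card {i\<in>I. f (v i) \<le> 0} | f :: real^'n \<Rightarrow> real. linear f \<and> f \<noteq> (\<lambda>x. 0)}"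
    and "{card {i\<in>I. f (v i) \<le> 0} | f :: real^'n \<Rightarrow> real. linear f \<and> f \<noteq> (\<lambda>x. 0)} \<noteq> {}"
proof -
  show "finite {card {i\<in>I. f (v i) \<le> 0} | f :: real^'n \<Rightarrow> real. linear f \<and> f \<noteq> (\<lambda>x. 0)}"
    by (rule finite_subset[of _ "{..card I}"])
       (auto intro!: card_mono assms)
  obtain k :: 'n where True by simp
  have "linear (\<lambda>x::real^'n. x $ k)" by (simp add: linearI)
  moreover have "(\<lambda>x::real^'n. x $ k) \<noteq> (\<lambda>x. 0)"
  proof
    assume "(\<lambda>x::real^'n. x $ k) = (\<lambda>x. 0)"
    then have "(axis k 1 :: real^'n) $ k = 0" by metis
    then show False by (simp add: axis_def)
  qed
  ultimately show "{card {i\<in>I. f (v i) \<le> 0} | f :: real^'n \<Rightarrow> real. linear f \<and> f \<noteq> (\<lambda>x. 0)} \<noteq> {}"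
    by blast
qed

lemma codeg_mono:
  fixes v :: "'i \<Rightarrow> real^'n"
  assumes "finite I" "J \<subseteq> I"
  shows "codeg_star J v \<le> codeg_star I v"
proof -
  have fJ: "finite J" using assms finite_subset by blast
  obtain f :: "real^'n \<Rightarrow> real" where f: "linear f" "f \<noteq> (\<lambda>x. 0)"
    "codeg_star I v = card {i\<in>I. f (v i) \<le> 0}"
    using Min_in[OF codeg_set_props[OF assms(1), of v]] unfolding codeg_star_def by auto
  have "codeg_star J v \<le> card {i\<in>J. f (v i) \<le> 0}"
    unfolding codeg_star_def using f by (intro Min_le codeg_set_props[OF fJ]) blast
  also have "\<dots> \<le> card {i\<in>I. f (v i) \<le> 0}" using assms by (intro card_mono) auto
  finally show ?thesis using f by simp
qed

lemma codeg_step: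
  fixes v :: "'i \<Rightarrow> real^'n"
  assumes fin: "finite I" and j: "j \<in> I" and nn: "\<forall>i\<in>I. 0 \<le> inner a (v i)"
    and pj: "0 < inner a (v j)"
  shows "codeg_star I v \<le> codeg_star (I - {j}) v"
proof -
  have fJ: "finite (I - {j})" using fin by simp
  obtain g :: "real^'n \<Rightarrow> real" where g: "linear g" "g \<noteq> (\<lambda>x. 0)"
    "codeg_star (I - {j}) v = card {i\<in>I - {j}. g (v i) \<le> 0}"
    using Min_in[OF codeg_set_props[OF fJ, of v]] unfolding codeg_star_def by auto
  define t0 where "t0 = (\<Sum>i\<in>{i\<in>I. 0 < inner a (v i)}. \<bar>g (v i)\<bar> / inner a (v i))"
  have key: "\<exists>h::real^'n \<Rightarrow> real. linear h \<and> h \<noteq> (\<lambda>x. 0) \<and> card {i\<in>I. h (v i) \<le> 0} \<le> card {i\<in>I - {j}. g (v i) \<le> 0}"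
  proof -
    have gen: "linear (\<lambda>x. g x + t * inner a x) \<and> card {i\<in>I. g (v i) + t * inner a (v i) \<le> 0} \<le> card {i\<in>I - {j}. g (v i) \<le> 0}"
      if t: "t > t0" for t
    proof
      have "linear (\<lambda>x. t * inner a x)"
        by (rule linearI) (auto simp: inner_add_right algebra_simps)
      then show "linear (\<lambda>x. g x + t * inner a x)" by (rule linear_compose_add[OF g(1)])
      show "card {i\<in>I. g (v i) + t * inner a (v i) \<le> 0} \<le> card {i\<in>I - {j}. g (v i) \<le> 0}"
      proof (rule card_mono)
        show "finite {i\<in>I - {j}. g (v i) \<le> 0}" using fin by simp
        show "{i\<in>I. g (v i) + t * inner a (v i) \<le> 0} \<subseteq> {i\<in>I - {j}. g (v i) \<le> 0}"
        proof
          fix i assume "i \<in> {i\<in>I. g (v i) + t * inner a (v i) \<le> 0}"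
          then have i: "i \<in> I" "g (v i) + t * inner a (v i) \<le> 0" by auto
          show "i \<in> {i\<in>I - {j}. g (v i) \<le> 0}"
          proof (cases "0 < inner a (v i)")
            case True
            have "\<bar>g (v i)\<bar> / inner a (v i) \<le> t0"
              unfolding t0_def using fin i(1) True
              by (intro member_le_sum) auto
            then have "\<bar>g (v i)\<bar> / inner a (v i) < t" using t by simp
            then have "\<bar>g (v i)\<bar> < t * inner a (v i)" using True by (simp add: divide_less_eq)
            then show ?thesis using i by simp
          next
            case False
            then have "inner a (v i) = 0" using nn i(1) by force
            then show ?thesis using i pj by auto
          qed
        qed
      qed
    qed
    show ?thesis
    proof (cases "(\<lambda>x. g x + (t0 + 1) * inner a x) = (\<lambda>x. 0)")
      case False
      then show ?thesis using gen[of "t0 + 1"] apply - apply (rule exI[of _ "\<lambda>x. g x + (t0 + 1) * inner a x"]) by simp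
    next
      case True
      have "(\<lambda>x. g x + (t0 + 2) * inner a x) \<noteq> (\<lambda>x. 0)"
      proof
        assume "(\<lambda>x. g x + (t0 + 2) * inner a x) = (\<lambda>x. 0)"
        then have "g (v j) + (t0 + 2) * inner a (v j) = 0" by metis
        moreover have "g (v j) + (t0 + 1) * inner a (v j) = 0" using True by metis
        ultimately have "inner a (v j) = 0" by (simp add: algebra_simps)
        then show False using pj by simp
      qed
      then show ?thesis using gen[of "t0 + 2"] apply - apply (rule exI[of _ "\<lambda>x. g x + (t0 + 2) * inner a x"]) by simp
    qed
  qed
  then obtain h :: "real^'n \<Rightarrow> real" where h: "linear h" "h \<noteq> (\<lambda>x. 0)"
    "card {i\<in>I. h (v i) \<le> 0} \<le> card {i\<in>I - {j}. g (v i) \<le> 0}" by blast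
  have "codeg_star I v \<le> card {i\<in>I. h (v i) \<le> 0}"
    unfolding codeg_star_def using h by (intro Min_le codeg_set_props[OF fin]) blast
  then show ?thesis using h(3) g(3) by simp
qed

lemma main_aux:
  fixes v :: "'i \<Rightarrow> real^'n"
  shows "finite I \<Longrightarrow> \<exists>J\<subseteq>I. totally_cyclic J v \<and> codeg_star J v = codeg_star I v"
proof (induction "card I" arbitrary: I rule: less_induct)
  case less
  show ?case
  proof (cases "totally_cyclic I v")
    case True
    then show ?thesis by blast
  next
    case False
    obtain a j where aj: "\<forall>i\<in>I. 0 \<le> inner a (v i)" "j \<in> I" "0 < inner a (v j)"
      using gordan[OF less.prems False] by blast
    have eq: "codeg_star (I - {j}) v = codeg_star I v"
      using codeg_step[OF less.prems aj(2) aj(1) aj(3)] codeg_mono[OF less.prems, of "I - {j}" v]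
      by simp
    have "card (I - {j}) < card I" using aj(2) less.prems by (metis card_Diff1_less)
    then obtain J where "J \<subseteq> I - {j}" "totally_cyclic J v" "codeg_star J v = codeg_star (I - {j}) v"
      using less.hyps[of "I - {j}"] less.prems by auto
    then show ?thesis using eq by auto
  qed
qed

theorem mainTheorem19:
  fixes I :: "'i set" and v :: "'i \<Rightarrow> real^'n"
  assumes "finite I"
    and "codeg_star I v \<ge> 1"
  shows "\<exists>J\<subseteq>I. totally_cyclic J v \<and> codeg_star J v = codeg_star I v"
  using main_aux[OF assms(1)] .

end
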